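(* Let $S$ be the three-vertex tree with root $a$, whose right child is $b$, where $b$ has a left child $c$ (preorder $132$), and let $S'$ be the three-vertex tree with a root having both a left child and a right child (preorder $213$); all edges of $S$ and $S'$ are contiguous. Let $(P,e)$ be any tree pattern. Let $Q$ be obtained from $S$ by attaching $(P,e)$ as the right subtree of the leaf $c$ via a non-contiguous edge, and let $Q'$ be obtained from $S'$ by attaching $(P,e)$ as the left subtree of the left leaf of $S'$ via a non-contiguous edge. Then $Q$ and $Q'$ are Wilf-equivalent.
   Context: $\mathcal{T}_n$ is the set of binary trees on $n$ vertices labeled $1,\dots,n$ by the search tree property (labels of combined trees reassigned by this property). $c_L,c_R,p$: left child, right child, parent. A tree pattern is $(P,e)$, $P\in\mathcal{T}_k$, $e\colon[k]\setminus\{\text{root}\}\to\{0,1\}$; edge $(i,p(i))$ is contiguous if $e(i)=1$, non-contiguous if $e(i)=0$. $T\in\mathcal{T}_n$ contains $(P,e)$ if there is an injection $f\colon[k]\to[n]$ such that for every non-root $i$ of $P$: if $e(i)=1$, $f(i)$ is the left (resp. right) child of $f(p(i))$ when $i$ is the left (resp. right) child of $p(i)$; if $e(i)=0$, $f(i)$ lies in the left (resp. right) subtree of $f(p(i))$. $\mathcal{T}_n(Q)$ is the set of avoiders of $Q$. $Q,Q'$ are Wilf-equivalent if $|\mathcal{T}_n(Q)|=|\mathcal{T}_n(Q')|$ for all $n\ge0$. *)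

theory Defs
  imports Main
begin

text \<open>Binary trees on n vertices.  A tree in T_n is determined by its shape, since the
labels 1..n are forced by the search tree property; so we use unlabeled shapes.\<close>
datatype btree = Leaf | Node btree btree

fun nnodes :: "btree \<Rightarrow> nat" where
  "nnodes Leaf = 0"
| "nnodes (Node l r) = Suc (nnodes l + nnodes r)"

text \<open>Vertices are addressed by paths from the root: False = go to left child,
True = go to right child.\<close>
fun nodes :: "btree \<Rightarrow> bool list set" where
  "nodes Leaf = {}"
| "nodes (Node l r) = {[]} \<union> Cons False ` nodes l \<union> Cons True ` nodes r"

text \<open>A tree pattern (P,e): P a nonempty tree, e assigns to each non-root vertex
(a path p @ [d]) whether the edge to its parent is contiguous (True) or not (False).
Values of e at non-vertices or at the root are irrelevant.\<close>
definition contains :: "btree \<Rightarrow> btree \<Rightarrow> (bool list \<Rightarrow> bool) \<Rightarrow> bool" where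
  "contains T P e \<longleftrightarrow> (\<exists>f. inj_on f (nodes P) \<and> f ` nodes P \<subseteq> nodes T \<and>
     (\<forall>p d. p @ [d] \<in> nodes P \<longrightarrow>
        (if e (p @ [d]) then f (p @ [d]) = f p @ [d]
         else (\<exists>r. f (p @ [d]) = f p @ d # r))))"

definition avoiders :: "nat \<Rightarrow> btree \<Rightarrow> (bool list \<Rightarrow> bool) \<Rightarrow> btree set" where
  "avoiders n P e = {T. nnodes T = n \<and> \<not> contains T P e}"

definition wilf_equiv ::
  "btree \<Rightarrow> (bool list \<Rightarrow> bool) \<Rightarrow> btree \<Rightarrow> (bool list \<Rightarrow> bool) \<Rightarrow> bool" where
  "wilf_equiv P e P' e' \<longleftrightarrow> (\<forall>n. card (avoiders n P e) = card (avoiders n P' e'))"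

text \<open>Edge labelling of a pattern obtained by attaching (P,e) at path pre via a
non-contiguous edge, all other edges contiguous.\<close>
definition attach_e :: "bool list \<Rightarrow> (bool list \<Rightarrow> bool) \<Rightarrow> bool list \<Rightarrow> bool" where
  "attach_e pre e x = (if (\<exists>q. x = pre @ q)
      then (if x = pre then False else e (drop (length pre) x)) else True)"

definition Q_tree :: "btree \<Rightarrow> btree" where
  "Q_tree P = Node Leaf (Node (Node Leaf P) Leaf)"

definition Q_e :: "(bool list \<Rightarrow> bool) \<Rightarrow> bool list \<Rightarrow> bool" where
  "Q_e e = attach_e [True, False, True] e"

definition Q'_tree :: "btree \<Rightarrow> btree" where
  "Q'_tree P = Node (Node P Leaf) (Node Leaf Leaf)"

definition Q'_e :: "(bool list \<Rightarrow> bool) \<Rightarrow> bool list \<Rightarrow> bool" where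
  "Q'_e e = attach_e [False, False] e"

end

theory Submission
  imports Defs "HOL-Computational_Algebra.Formal_Power_Series"
begin

fun sub :: "btree \<Rightarrow> bool list \<Rightarrow> btree" where
  "sub T [] = T"
| "sub Leaf (d#p) = Leaf"
| "sub (Node l r) (d#p) = (if d then sub r p else sub l p)"

lemma nodes_Nil[simp]: "([] \<in> nodes T) = (T \<noteq> Leaf)"
  by (cases T) auto

lemma Cons_in_image_Cons[simp]: "(d # p \<in> Cons b ` A) = (d = b \<and> p \<in> A)"
  by auto

lemma Nil_in_image_Cons[simp]: "([] \<in> Cons b ` A) = False"
  by auto

lemma nodes_Cons[simp]: "(d#p \<in> nodes (Node l r)) = (if d then p \<in> nodes r else p \<in> nodes l)"
  by auto

lemma nodes_Cons_Leaf[simp]: "(d#p \<in> nodes Leaf) = False"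
  by auto

lemma nodes_append: "(c @ x \<in> nodes T) = (x \<in> nodes (sub T c))"
proof (induction c arbitrary: T)
  case Nil
  then show ?case by simp
next
  case (Cons d c)
  then show ?case by (cases T) auto
qed

lemma nodes_prefix: "p @ q \<in> nodes T \<Longrightarrow> p \<in> nodes T"
  by (metis nodes_append append_Nil2 empty_iff nodes.simps(1) nodes_Nil)

definition emb :: "btree \<Rightarrow> btree \<Rightarrow> (bool list \<Rightarrow> bool) \<Rightarrow> (bool list \<Rightarrow> bool list) \<Rightarrow> bool" where
  "emb T P e f \<longleftrightarrow> inj_on f (nodes P) \<and> f ` nodes P \<subseteq> nodes T \<and>
     (\<forall>p d. p @ [d] \<in> nodes P \<longrightarrow>
        (if e (p @ [d]) then f (p @ [d]) = f p @ [d]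
         else (\<exists>r. f (p @ [d]) = f p @ d # r)))"

lemma contains_emb: "contains T P e = (\<exists>f. emb T P e f)"
  unfolding contains_def emb_def by simp

lemma sub_contains:
  assumes "contains (sub T c) P e" shows "contains T P e"
proof -
  obtain f where f: "emb (sub T c) P e f" using assms contains_emb by blast
  have "emb T P e (\<lambda>q. c @ f q)"
    using f unfolding emb_def inj_on_def
    by (auto simp: nodes_append)
  then show ?thesis using contains_emb by blast
qed


lemma attach:
  assumes PL: "P \<noteq> Leaf"
    and nQ: "nodes Qt = Sn \<union> (\<lambda>q. pre @ q) ` nodes P"
    and Snc: "\<And>p d. p @ [d] \<in> Sn \<Longrightarrow> p \<in> Sn"
    and pre: "pre = pp @ [dd]" "pp \<in> Sn"
    and disj: "\<And>s q. s \<in> Sn \<Longrightarrow> s \<noteq> pre @ q"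
  shows "contains T Qt (attach_e pre e) \<longleftrightarrow>
         (\<exists>a. (\<forall>s\<in>Sn. a @ s \<in> nodes T) \<and> contains (sub T (a @ pre)) P e)"
proof
  assume "contains T Qt (attach_e pre e)"
  then obtain f where f: "emb T Qt (attach_e pre e) f" using contains_emb by blast
  have inj: "inj_on f (nodes Qt)" and img: "f ` nodes Qt \<subseteq> nodes T"
    and edge: "\<And>p d. p @ [d] \<in> nodes Qt \<Longrightarrow>
        (if attach_e pre e (p @ [d]) then f (p @ [d]) = f p @ [d]
         else (\<exists>r. f (p @ [d]) = f p @ d # r))"
    using f unfolding emb_def by blast+
  define a where "a = f []"
  have aeS: "attach_e pre e s" if "s \<in> Sn" for s
    using disj[OF that] unfolding attach_e_def by auto
  have fS: "s \<in> Sn \<Longrightarrow> f s = a @ s" for s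
  proof (induction s rule: rev_induct)
    case Nil then show ?case by (simp add: a_def)
  next
    case (snoc d p)
    have "p \<in> Sn" using snoc.prems Snc by blast
    moreover have "p @ [d] \<in> nodes Qt" using snoc.prems nQ by blast
    ultimately show ?case using edge[of p d] aeS[OF snoc.prems] snoc.IH by simp
  qed
  have fP: "q \<in> nodes P \<Longrightarrow> \<exists>r. f (pre @ q) = a @ pre @ r" for q
  proof (induction q rule: rev_induct)
    case Nil
    have "pp @ [dd] \<in> nodes Qt" using nQ PL pre by auto
    moreover have "\<not> attach_e pre e (pp @ [dd])" unfolding attach_e_def pre by simp
    ultimately obtain r where "f (pp @ [dd]) = f pp @ dd # r" using edge[of pp dd] by auto
    then show ?case using fS[OF pre(2)] pre by auto
  next
    case (snoc d q)
    have "q \<in> nodes P" using snoc.prems nodes_prefix by blast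
    then obtain r where r: "f (pre @ q) = a @ pre @ r" using snoc.IH by blast
    have "(pre @ q) @ [d] \<in> nodes Qt" using snoc.prems nQ by auto
    then have "\<exists>r'. f ((pre @ q) @ [d]) = f (pre @ q) @ d # r'"
      using edge[of "pre @ q" d] by (auto split: if_splits)
    then show ?case using r by auto
  qed
  define g where "g q = drop (length (a @ pre)) (f (pre @ q))" for q
  have fg: "q \<in> nodes P \<Longrightarrow> f (pre @ q) = a @ pre @ g q" for q
    using fP[of q] unfolding g_def by auto
  have inQ: "q \<in> nodes P \<Longrightarrow> pre @ q \<in> nodes Qt" for q using nQ by auto
  have "emb (sub T (a @ pre)) P e g"
    unfolding emb_def
  proof (intro conjI allI impI)
    show "inj_on g (nodes P)"
    proof (rule inj_onI)
      fix x y assume "x \<in> nodes P" "y \<in> nodes P" "g x = g y"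
      then have "f (pre @ x) = f (pre @ y)" using fg by simp
      then show "x = y" using inj inQ \<open>x \<in> nodes P\<close> \<open>y \<in> nodes P\<close>
        by (meson inj_onD same_append_eq)
    qed
    show "g ` nodes P \<subseteq> nodes (sub T (a @ pre))"
    proof
      fix y assume "y \<in> g ` nodes P"
      then obtain q where q: "q \<in> nodes P" "y = g q" by blast
      have "f (pre @ q) \<in> nodes T" using img inQ[OF q(1)] by blast
      then show "y \<in> nodes (sub T (a @ pre))" using fg[OF q(1)] q(2) nodes_append
        by (metis append.assoc)
    qed
    fix p d assume pd: "p @ [d] \<in> nodes P"
    have pP: "p \<in> nodes P" using pd nodes_prefix by blast
    have ae: "attach_e pre e ((pre @ p) @ [d]) = e (p @ [d])"
      unfolding attach_e_def by auto
    have "(pre @ p) @ [d] \<in> nodes Qt" using inQ[OF pd] by simp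
    from edge[OF this] show "if e (p @ [d]) then g (p @ [d]) = g p @ [d]
         else (\<exists>r. g (p @ [d]) = g p @ d # r)"
      using fg[OF pd] fg[OF pP] ae by (auto split: if_splits)
  qed
  then have "contains (sub T (a @ pre)) P e" using contains_emb by blast
  moreover have "\<forall>s\<in>Sn. a @ s \<in> nodes T"
    using fS img nQ by auto
  ultimately show "\<exists>a. (\<forall>s\<in>Sn. a @ s \<in> nodes T) \<and> contains (sub T (a @ pre)) P e"
    by blast
next
  assume "\<exists>a. (\<forall>s\<in>Sn. a @ s \<in> nodes T) \<and> contains (sub T (a @ pre)) P e"
  then obtain a g where aS: "\<forall>s\<in>Sn. a @ s \<in> nodes T" and g: "emb (sub T (a @ pre)) P e g"
    using contains_emb by blast
  have ginj: "inj_on g (nodes P)" and gimg: "g ` nodes P \<subseteq> nodes (sub T (a @ pre))"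
    and gedge: "\<And>p d. p @ [d] \<in> nodes P \<Longrightarrow>
        (if e (p @ [d]) then g (p @ [d]) = g p @ [d]
         else (\<exists>r. g (p @ [d]) = g p @ d # r))"
    using g unfolding emb_def by blast+
  define f where "f x = (if x \<in> Sn then a @ x else a @ pre @ g (drop (length pre) x))" for x
  have fS: "s \<in> Sn \<Longrightarrow> f s = a @ s" for s by (simp add: f_def)
  have fP: "f (pre @ q) = a @ pre @ g q" for q
    using disj[of "pre @ q" "q"] by (auto simp: f_def)
  have nS: "pre @ q \<notin> Sn" for q using disj by blast
  have "emb T Qt (attach_e pre e) f"
    unfolding emb_def
  proof (intro conjI allI impI)
    show "inj_on f (nodes Qt)"
    proof (rule inj_onI)
      fix x y assume x: "x \<in> nodes Qt" and y: "y \<in> nodes Qt" and fxy: "f x = f y"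
      show "x = y"
      proof (cases "x \<in> Sn")
        case True
        show ?thesis
        proof (cases "y \<in> Sn")
          case True then show ?thesis using fxy fS \<open>x \<in> Sn\<close> by simp
        next
          case False
          then obtain q where "y = pre @ q" using y nQ by blast
          then show ?thesis using fxy fS[OF \<open>x \<in> Sn\<close>] fP disj[OF \<open>x \<in> Sn\<close>] by simp
        qed
      next
        case False
        then obtain q where q: "x = pre @ q" "q \<in> nodes P" using x nQ by blast
        show ?thesis
        proof (cases "y \<in> Sn")
          case True then show ?thesis by (metis fxy fS[OF True] fP q(1) disj[OF True] same_append_eq)
        next
          case False
          then obtain q' where q': "y = pre @ q'" "q' \<in> nodes P" using y nQ by blast
          then show ?thesis using fxy q fP ginj by (simp add: inj_on_def)
        qed
      qed
    qed
    show "f ` nodes Qt \<subseteq> nodes T"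
    proof
      fix y assume "y \<in> f ` nodes Qt"
      then obtain x where x: "x \<in> nodes Qt" "y = f x" by blast
      show "y \<in> nodes T"
      proof (cases "x \<in> Sn")
        case True then show ?thesis using aS x fS by simp
      next
        case False
        then obtain q where q: "x = pre @ q" "q \<in> nodes P" using x nQ by blast
        then have "g q \<in> nodes (sub T (a @ pre))" using gimg by blast
        then show ?thesis using x q fP nodes_append by (metis append.assoc)
      qed
    qed
    fix p d assume pd: "p @ [d] \<in> nodes Qt"
    show "if attach_e pre e (p @ [d]) then f (p @ [d]) = f p @ [d]
         else (\<exists>r. f (p @ [d]) = f p @ d # r)"
    proof (cases "p @ [d] \<in> Sn")
      case True
      have "attach_e pre e (p @ [d])" using disj[OF True] unfolding attach_e_def by auto
      moreover have "p \<in> Sn" using Snc True by blast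
      ultimately show ?thesis using fS True by simp
    next
      case False
      then obtain q where q: "p @ [d] = pre @ q" "q \<in> nodes P" using pd nQ by blast
      show ?thesis
      proof (cases q rule: rev_exhaust)
        case Nil
        then have "p = pp" "d = dd" using q pre by auto
        moreover have "\<not> attach_e pre e (p @ [d])" using q Nil unfolding attach_e_def by simp
        ultimately show ?thesis using fS[OF pre(2)] fP[of "[]"] q Nil pre by simp
      next
        case (snoc q' d')
        then have pq: "p = pre @ q'" "d' = d" using q by auto
        have ae: "attach_e pre e (p @ [d]) = e (q' @ [d])"
          using pq unfolding attach_e_def by auto
        have "q' @ [d] \<in> nodes P" using q snoc pq by simp
        from gedge[OF this] show ?thesis using ae fP pq by (auto split: if_splits)
      qed
    qed
  qed
  then show "contains T Qt (attach_e pre e)" using contains_emb by blast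
qed


lemma ex_list_split: "(\<exists>a::bool list. \<Phi> a) \<longleftrightarrow> \<Phi> [] \<or> (\<exists>a. \<Phi> (False # a)) \<or> (\<exists>a. \<Phi> (True # a))"
  by (metis (full_types) list.exhaust)

lemma contains_Q:
  assumes "P \<noteq> Leaf"
  shows "contains T (Q_tree P) (Q_e e) \<longleftrightarrow>
    (\<exists>a. a @ [True, False] \<in> nodes T \<and> contains (sub T (a @ [True, False, True])) P e)"
proof -
  have "contains T (Q_tree P) (attach_e [True, False, True] e) \<longleftrightarrow>
    (\<exists>a. (\<forall>s\<in>{[], [True], [True, False]}. a @ s \<in> nodes T) \<and> contains (sub T (a @ [True, False, True])) P e)"
    by (rule attach[OF assms, where pp = "[True, False]" and dd = True]) (auto simp: Q_tree_def)
  moreover have "(\<forall>s\<in>{[], [True], [True, False]}. a @ s \<in> nodes T) \<longleftrightarrow> a @ [True, False] \<in> nodes T" for a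
  proof -
    have "a @ [True, False] \<in> nodes T \<Longrightarrow> a @ [True] \<in> nodes T"
      using nodes_prefix[of "a @ [True]" "[False]" T] by simp
    then show ?thesis by (auto dest: nodes_prefix[of a])
  qed
  ultimately show ?thesis unfolding Q_e_def by (simp only:)
qed

lemma contains_Q':
  assumes "P \<noteq> Leaf"
  shows "contains T (Q'_tree P) (Q'_e e) \<longleftrightarrow>
    (\<exists>a. a @ [False] \<in> nodes T \<and> a @ [True] \<in> nodes T \<and> contains (sub T (a @ [False, False])) P e)"
proof -
  have "contains T (Q'_tree P) (attach_e [False, False] e) \<longleftrightarrow>
    (\<exists>a. (\<forall>s\<in>{[], [False], [True]}. a @ s \<in> nodes T) \<and> contains (sub T (a @ [False, False])) P e)"
    by (rule attach[OF assms, where pp = "[False]" and dd = False]) (auto simp: Q'_tree_def)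
  moreover have "(\<forall>s\<in>{[], [False], [True]}. a @ s \<in> nodes T) \<longleftrightarrow> a @ [False] \<in> nodes T \<and> a @ [True] \<in> nodes T" for a
    by (auto dest: nodes_prefix[of a])
  ultimately show ?thesis unfolding Q'_e_def by auto
qed

fun badQ :: "(btree \<Rightarrow> bool) \<Rightarrow> btree \<Rightarrow> bool" where
  "badQ C Leaf = False"
| "badQ C (Node l r) = (badQ C l \<or> badQ C r \<or> (case r of Node (Node x y) z \<Rightarrow> C y | _ \<Rightarrow> False))"

fun badQ' :: "(btree \<Rightarrow> bool) \<Rightarrow> btree \<Rightarrow> bool" where
  "badQ' C Leaf = False"
| "badQ' C (Node l r) = (badQ' C l \<or> badQ' C r \<or> (case l of Node x y \<Rightarrow> r \<noteq> Leaf \<and> C x | _ \<Rightarrow> False))"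

lemma badQ_iff: "(\<exists>a. a @ [True, False] \<in> nodes T \<and> C (sub T (a @ [True, False, True]))) \<longleftrightarrow> badQ C T"
proof (induction T)
  case Leaf then show ?case by simp
next
  case (Node l r)
  define \<Phi> where "\<Phi> a = (a @ [True, False] \<in> nodes (Node l r) \<and> C (sub (Node l r) (a @ [True, False, True])))" for a
  have A: "\<Phi> [] = (case r of Node (Node x y) z \<Rightarrow> C y | _ \<Rightarrow> False)"
  proof (cases r)
    case Leaf then show ?thesis by (simp add: \<Phi>_def)
  next
    case (Node r1 r2) then show ?thesis by (cases r1) (simp_all add: \<Phi>_def)
  qed
  have B: "(\<exists>a. \<Phi> (False # a)) = badQ C l" unfolding \<Phi>_def using Node.IH(1) by simp
  have D: "(\<exists>a. \<Phi> (True # a)) = badQ C r" unfolding \<Phi>_def using Node.IH(2) by simp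
  have "(\<exists>a. \<Phi> a) = badQ C (Node l r)"
    using ex_list_split[of \<Phi>] A B D by (simp only: badQ.simps) blast
  then show ?case unfolding \<Phi>_def .
qed

lemma badQ'_iff: "(\<exists>a. a @ [False] \<in> nodes T \<and> a @ [True] \<in> nodes T \<and> C (sub T (a @ [False, False]))) \<longleftrightarrow> badQ' C T"
proof (induction T)
  case Leaf then show ?case by simp
next
  case (Node l r)
  define \<Phi> where "\<Phi> a = (a @ [False] \<in> nodes (Node l r) \<and> a @ [True] \<in> nodes (Node l r) \<and> C (sub (Node l r) (a @ [False, False])))" for a
  have A: "\<Phi> [] = (case l of Node x y \<Rightarrow> r \<noteq> Leaf \<and> C x | _ \<Rightarrow> False)"
    unfolding \<Phi>_def by (cases l) auto
  have B: "(\<exists>a. \<Phi> (False # a)) = badQ' C l" unfolding \<Phi>_def using Node.IH(1) by simp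
  have D: "(\<exists>a. \<Phi> (True # a)) = badQ' C r" unfolding \<Phi>_def using Node.IH(2) by simp
  have "(\<exists>a. \<Phi> a) = badQ' C (Node l r)"
    using ex_list_split[of \<Phi>] A B D by (simp only: badQ'.simps) blast
  then show ?case unfolding \<Phi>_def .
qed


lemma nnodes_0_iff: "(nnodes T = 0) = (T = Leaf)"
  by (cases T) auto

lemma finite_size: "finite {T. nnodes T = n}"
proof (induction n rule: less_induct)
  case (less n)
  show ?case
  proof (cases n)
    case 0
    then have "{T. nnodes T = n} = {Leaf}" by (auto simp: nnodes_0_iff)
    then show ?thesis by simp
  next
    case (Suc m)
    have "{T. nnodes T = n} \<subseteq> (\<lambda>(l,r). Node l r) ` (\<Union>i\<in>{..m}. {l. nnodes l = i} \<times> {r. nnodes r = m - i})"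
    proof
      fix T assume "T \<in> {T. nnodes T = n}"
      then have T: "nnodes T = Suc m" using Suc by simp
      then obtain l r where lr: "T = Node l r" by (cases T) auto
      then have "nnodes l + nnodes r = m" using T by simp
      then have "(l, r) \<in> (\<Union>i\<in>{..m}. {l. nnodes l = i} \<times> {r. nnodes r = m - i})" by auto
      then show "T \<in> (\<lambda>(l,r). Node l r) ` (\<Union>i\<in>{..m}. {l. nnodes l = i} \<times> {r. nnodes r = m - i})"
        using lr by force
    qed
    moreover have "finite (\<Union>i\<in>{..m}. {l. nnodes l = i} \<times> {r. nnodes r = m - i})"
      using less.IH Suc by (intro finite_UN_I finite_cartesian_product) auto
    ultimately show ?thesis using finite_subset by blast
  qed
qed

lemma finite_size_P: "finite {T. nnodes T = n \<and> \<Phi> T}"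
  using finite_size[of n] by (rule rev_finite_subset) auto

definition cnt :: "(btree \<Rightarrow> bool) \<Rightarrow> nat \<Rightarrow> nat" where
  "cnt \<Phi> n = card {T. nnodes T = n \<and> \<Phi> T}"

definition gf :: "(btree \<Rightarrow> bool) \<Rightarrow> int fps" where
  "gf \<Phi> = Abs_fps (\<lambda>n. int (cnt \<Phi> n))"

lemma gf_nth: "fps_nth (gf \<Phi>) n = int (cnt \<Phi> n)"
  by (simp add: gf_def)

lemma gf_Leaf: "gf (\<lambda>T. T = Leaf) = 1"
proof (rule fps_ext)
  fix n
  show "fps_nth (gf (\<lambda>T. T = Leaf)) n = fps_nth 1 n"
  proof (cases "n = 0")
    case True
    then have "{T. nnodes T = n \<and> T = Leaf} = {Leaf}" by auto
    then show ?thesis using True by (simp add: gf_nth cnt_def)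
  next
    case False
    then have "{T. nnodes T = n \<and> T = Leaf} = {}" by auto
    then show ?thesis using False by (simp add: gf_nth cnt_def)
  qed
qed

lemma gf_disj:
  assumes "\<And>T. \<Phi> T \<Longrightarrow> \<Psi> T \<Longrightarrow> False"
  shows "gf (\<lambda>T. \<Phi> T \<or> \<Psi> T) = gf \<Phi> + gf \<Psi>"
proof (rule fps_ext)
  fix n
  have "{T. nnodes T = n \<and> (\<Phi> T \<or> \<Psi> T)} = {T. nnodes T = n \<and> \<Phi> T} \<union> {T. nnodes T = n \<and> \<Psi> T}"
    by auto
  moreover have "{T. nnodes T = n \<and> \<Phi> T} \<inter> {T. nnodes T = n \<and> \<Psi> T} = {}"
    using assms by auto
  ultimately have "card {T. nnodes T = n \<and> (\<Phi> T \<or> \<Psi> T)} = card {T. nnodes T = n \<and> \<Phi> T} + card {T. nnodes T = n \<and> \<Psi> T}"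
    using card_Un_disjoint[OF finite_size_P finite_size_P] by simp
  then show "fps_nth (gf (\<lambda>T. \<Phi> T \<or> \<Psi> T)) n = fps_nth (gf \<Phi> + gf \<Psi>) n"
    by (simp add: gf_nth cnt_def)
qed

lemma gf_Node: "gf (\<lambda>T. \<exists>l r. T = Node l r \<and> \<Phi> l \<and> \<Psi> r) = fps_X * (gf \<Phi> * gf \<Psi>)"
proof (rule fps_ext)
  fix n
  show "fps_nth (gf (\<lambda>T. \<exists>l r. T = Node l r \<and> \<Phi> l \<and> \<Psi> r)) n = fps_nth (fps_X * (gf \<Phi> * gf \<Psi>)) n"
  proof (cases n)
    case 0
    then show ?thesis by (simp add: gf_nth cnt_def nnodes_0_iff)
  next
    case (Suc m)
    define S where "S i = {l. nnodes l = i \<and> \<Phi> l} \<times> {r. nnodes r = m - i \<and> \<Psi> r}" for i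
    have eq: "{T. nnodes T = n \<and> (\<exists>l r. T = Node l r \<and> \<Phi> l \<and> \<Psi> r)} =
      (\<Union>i\<in>{0..m}. (\<lambda>(l,r). Node l r) ` S i)"
    proof
      show "{T. nnodes T = n \<and> (\<exists>l r. T = Node l r \<and> \<Phi> l \<and> \<Psi> r)} \<subseteq> (\<Union>i\<in>{0..m}. (\<lambda>(l,r). Node l r) ` S i)"
      proof
        fix T assume "T \<in> {T. nnodes T = n \<and> (\<exists>l r. T = Node l r \<and> \<Phi> l \<and> \<Psi> r)}"
        then obtain l r where lr: "T = Node l r" "\<Phi> l" "\<Psi> r" "nnodes l + nnodes r = m"
          using Suc by auto
        then have "(l, r) \<in> S (nnodes l)" "nnodes l \<in> {0..m}" by (auto simp: S_def)
        then show "T \<in> (\<Union>i\<in>{0..m}. (\<lambda>(l,r). Node l r) ` S i)" using lr by force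
      qed
      show "(\<Union>i\<in>{0..m}. (\<lambda>(l,r). Node l r) ` S i) \<subseteq> {T. nnodes T = n \<and> (\<exists>l r. T = Node l r \<and> \<Phi> l \<and> \<Psi> r)}"
        using Suc by (auto simp: S_def)
    qed
    have fin: "finite (S i)" for i unfolding S_def
      by (intro finite_cartesian_product finite_size_P)
    have inj: "inj_on (\<lambda>(l,r). Node l r) (S i)" for i
      by (rule inj_onI) auto
    have "card (\<Union>i\<in>{0..m}. (\<lambda>(l,r). Node l r) ` S i) = (\<Sum>i=0..m. card ((\<lambda>(l,r). Node l r) ` S i))"
      by (rule card_UN_disjoint) (auto simp: fin S_def finite_size_P)
    also have "\<dots> = (\<Sum>i=0..m. cnt \<Phi> i * cnt \<Psi> (m - i))"
    proof (rule sum.cong)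
      fix i
      have "card ((\<lambda>(l,r). Node l r) ` S i) = card (S i)" by (rule card_image[OF inj])
      then show "card ((\<lambda>(l,r). Node l r) ` S i) = cnt \<Phi> i * cnt \<Psi> (m - i)"
        by (simp add: S_def cnt_def card_cartesian_product)
    qed simp
    finally have "cnt (\<lambda>T. \<exists>l r. T = Node l r \<and> \<Phi> l \<and> \<Psi> r) n = (\<Sum>i=0..m. cnt \<Phi> i * cnt \<Psi> (m - i))"
      unfolding cnt_def eq .
    then have L: "fps_nth (gf (\<lambda>T. \<exists>l r. T = Node l r \<and> \<Phi> l \<and> \<Psi> r)) n = (\<Sum>i=0..m. int (cnt \<Phi> i) * int (cnt \<Psi> (m - i)))"
      by (simp add: gf_nth Suc)
    have "fps_nth (fps_X * (gf \<Phi> * gf \<Psi>)) n = fps_nth (gf \<Phi> * gf \<Psi>) m"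
      using Suc by (simp only: fps_X_mult_nth) simp
    also have "\<dots> = (\<Sum>i=0..m. int (cnt \<Phi> i) * int (cnt \<Psi> (m - i)))"
      by (simp only: fps_mult_nth gf_nth)
    finally show ?thesis using L by simp
  qed
qed


lemma caseQ: "(case r of Node (Node x y) z \<Rightarrow> C y | _ \<Rightarrow> False) = (\<exists>x y z. r = Node (Node x y) z \<and> C y)"
proof (cases r)
  case Leaf then show ?thesis by simp
next
  case (Node r1 r2) then show ?thesis by (cases r1) simp_all
qed

lemma caseQ': "(case l of Node x y \<Rightarrow> r \<noteq> Leaf \<and> C x | _ \<Rightarrow> False) = (\<exists>x y. l = Node x y \<and> r \<noteq> Leaf \<and> C x)"
  by (cases l) simp_all

lemma badQ_Node: "badQ C (Node l r) = (badQ C l \<or> badQ C r \<or> (\<exists>x y z. r = Node (Node x y) z \<and> C y))"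
  by (simp only: badQ.simps caseQ)

lemma badQ'_Node: "badQ' C (Node l r) = (badQ' C l \<or> badQ' C r \<or> (\<exists>x y. l = Node x y \<and> r \<noteq> Leaf \<and> C x))"
  by (simp only: badQ'.simps caseQ')

declare badQ.simps(2)[simp del] badQ'.simps(2)[simp del]

theorem lemma20:
  fixes P :: btree and e :: "bool list \<Rightarrow> bool"
  assumes "P \<noteq> Leaf"
  shows "wilf_equiv (Q_tree P) (Q_e e) (Q'_tree P) (Q'_e e)"
proof -
  define C where "C T = contains T P e" for T
  have Csub: "C (sub T c) \<Longrightarrow> C T" for T c unfolding C_def by (rule sub_contains)
  have C_left: "C x \<Longrightarrow> C (Node x y)" for x y using Csub[of "Node x y" "[False]"] by simp
  have C_inner: "C y \<Longrightarrow> C (Node (Node x y) z)" for x y z using Csub[of "Node (Node x y) z" "[False, True]"] by simp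
  have badQ_C: "badQ C T \<Longrightarrow> C T" for T using badQ_iff[of T C] Csub by blast
  have badQ'_C: "badQ' C T \<Longrightarrow> C T" for T using badQ'_iff[of T C] Csub by blast
  have avQ: "avoiders n (Q_tree P) (Q_e e) = {T. nnodes T = n \<and> \<not> badQ C T}" for n
    unfolding avoiders_def using contains_Q[OF assms] badQ_iff[of _ C] unfolding C_def by simp
  have avQ': "avoiders n (Q'_tree P) (Q'_e e) = {T. nnodes T = n \<and> \<not> badQ' C T}" for n
    unfolding avoiders_def using contains_Q'[OF assms] badQ'_iff[of _ C] unfolding C_def by simp
  define okF where "okF T = (\<not> badQ C T)" for T
  define GQ where "GQ T = (okF T \<and> (\<forall>x y z. T = Node (Node x y) z \<longrightarrow> \<not> C y))" for T
  define L1 where "L1 T = (T = Leaf \<or> (\<exists>x y. T = Node x y \<and> okF x \<and> \<not> C y))" for T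
  define A where "A T = (\<not> C T)" for T
  define okF' where "okF' T = (\<not> badQ' C T)" for T
  define X where "X = (fps_X :: int fps)"
  have P1: "okF = (\<lambda>T. T = Leaf \<or> (\<exists>l r. T = Node l r \<and> okF l \<and> GQ r))"
  proof (rule ext)
    fix T show "okF T = (T = Leaf \<or> (\<exists>l r. T = Node l r \<and> okF l \<and> GQ r))"
      by (cases T) (auto simp: okF_def GQ_def badQ_Node)
  qed
  have P2: "GQ = (\<lambda>T. T = Leaf \<or> (\<exists>l r. T = Node l r \<and> L1 l \<and> GQ r))"
  proof (rule ext)
    fix T show "GQ T = (T = Leaf \<or> (\<exists>l r. T = Node l r \<and> L1 l \<and> GQ r))"
    proof (cases T)
      case Leaf then show ?thesis by (simp add: GQ_def okF_def)
    next
      case (Node l r)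
      have "(okF l \<and> (\<forall>x y. l = Node x y \<longrightarrow> \<not> C y)) = L1 l"
      proof (cases l)
        case Leaf then show ?thesis by (simp add: L1_def okF_def)
      next
        case (Node x y)
        then show ?thesis using badQ_C[of y] C_inner
          by (auto simp: L1_def okF_def badQ_Node)
      qed
      then show ?thesis using Node by (auto simp: GQ_def okF_def badQ_Node)
    qed
  qed
  have P3: "L1 = (\<lambda>T. T = Leaf \<or> (\<exists>l r. T = Node l r \<and> okF l \<and> A r))"
    by (rule ext) (simp add: L1_def A_def)
  have P4: "okF' = (\<lambda>T. T = Leaf \<or> ((\<exists>l r. T = Node l r \<and> okF' l \<and> r = Leaf) \<or>
      ((\<exists>l r. T = Node l r \<and> l = Leaf \<and> (okF' r \<and> r \<noteq> Leaf)) \<or>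
       (\<exists>l r. T = Node l r \<and> (\<exists>x y. l = Node x y \<and> A x \<and> okF' y) \<and> (okF' r \<and> r \<noteq> Leaf)))))"
  proof (rule ext)
    fix T show "okF' T = (T = Leaf \<or> ((\<exists>l r. T = Node l r \<and> okF' l \<and> r = Leaf) \<or>
      ((\<exists>l r. T = Node l r \<and> l = Leaf \<and> (okF' r \<and> r \<noteq> Leaf)) \<or>
       (\<exists>l r. T = Node l r \<and> (\<exists>x y. l = Node x y \<and> A x \<and> okF' y) \<and> (okF' r \<and> r \<noteq> Leaf)))))"
    proof (cases T)
      case Leaf then show ?thesis by (simp add: okF'_def)
    next
      case (Node l r)
      show ?thesis
      proof (cases l)
        case Leaf then show ?thesis using Node by (auto simp: okF'_def badQ'_Node)
      next
        case (Node x y)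
        then show ?thesis using \<open>T = Node l r\<close> badQ'_C[of x] C_left
          by (auto simp: okF'_def A_def badQ'_Node)
      qed
    qed
  qed
  have P5: "okF' = (\<lambda>T. T = Leaf \<or> (okF' T \<and> T \<noteq> Leaf))"
    by (rule ext) (auto simp: okF'_def)
  have E1: "gf okF = 1 + X * (gf okF * gf GQ)"
    apply (subst P1)
    apply (subst gf_disj)
     apply blast
    apply (simp only: gf_Leaf gf_Node X_def)
    done
  have E2: "gf GQ = 1 + X * (gf L1 * gf GQ)"
    apply (subst P2)
    apply (subst gf_disj)
     apply blast
    apply (simp only: gf_Leaf gf_Node X_def)
    done
  have E3: "gf L1 = 1 + X * (gf okF * gf A)"
    apply (subst P3)
    apply (subst gf_disj)
     apply blast
    apply (simp only: gf_Leaf gf_Node X_def)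
    done
  have E5: "gf (\<lambda>T. okF' T \<and> T \<noteq> Leaf) = gf okF' - 1"
  proof -
    have "gf okF' = 1 + gf (\<lambda>T. okF' T \<and> T \<noteq> Leaf)"
      apply (subst P5)
      apply (subst gf_disj)
       apply blast
      apply (simp only: gf_Leaf)
      done
    then show ?thesis by simp
  qed
  have E6: "gf (\<lambda>T. \<exists>x y. T = Node x y \<and> A x \<and> okF' y) = X * (gf A * gf okF')"
    unfolding X_def by (rule gf_Node)
  have E4: "gf okF' = 1 + (X * (gf okF' * 1) + (X * (1 * (gf okF' - 1)) + X * ((X * (gf A * gf okF')) * (gf okF' - 1))))"
    apply (subst P4)
    apply (subst gf_disj, blast)+
    apply (simp only: gf_Leaf gf_Node X_def E5 E6[unfolded X_def])
    done
  define F where "F = gf okF"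
  define G where "G = gf GQ"
  define L where "L = gf L1"
  define Aa where "Aa = gf A"
  define H where "H = gf okF'"
  have e1: "F = 1 + X * (F * G)" using E1 unfolding F_def G_def .
  have e2: "G = 1 + X * (L * G)" using E2 unfolding L_def G_def .
  have e3: "L = 1 + X * (F * Aa)" using E3 unfolding F_def L_def Aa_def .
  have e4: "H = 1 + (X * (H * 1) + (X * (1 * (H - 1)) + X * ((X * (Aa * H)) * (H - 1))))"
    using E4 unfolding H_def Aa_def .
  have key: "(F - H) * (1 - 2 * X + X * X * Aa - X * X * Aa * (F + H)) = 0"
    using e1 e2 e3 e4 by algebra
  have nz: "1 - 2 * X + X * X * Aa - X * X * Aa * (F + H) \<noteq> 0"
  proof
    assume "1 - 2 * X + X * X * Aa - X * X * Aa * (F + H) = 0"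
    then have "fps_nth (1 - 2 * X + X * X * Aa - X * X * Aa * (F + H)) 0 = 0" by simp
    then show False by (simp add: X_def)
  qed
  have "F = H" using key nz by simp
  show ?thesis
    unfolding wilf_equiv_def
  proof
    fix n
    have "fps_nth F n = fps_nth H n" using \<open>F = H\<close> by simp
    then have "cnt okF n = cnt okF' n" unfolding F_def H_def gf_nth by simp
    then show "card (avoiders n (Q_tree P) (Q_e e)) = card (avoiders n (Q'_tree P) (Q'_e e))"
      unfolding avQ avQ' cnt_def okF_def okF'_def .
  qed
qed

end
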